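(* Let $(W,\odot,\mathbb{1})$ be a monoid and let $(M,+,\mathbb{0},\otimes)$ be an $\omega$-continuous (left) $W$-module. Then for every $W$-wgcl program $C$, the weakest preweighting transformer $\mathrm{wp}[\![C]\!]$ is a well-defined $\omega$-continuous map $\mathrm{Wt}\to\mathrm{Wt}$ on the module of weightings $\mathrm{Wt}=M^{\Sigma}$ (i.e. it preserves suprema of increasing $\omega$-chains). In particular, for every loop $\mathtt{while}(\varphi)\{C\}$ and every $f\in\mathrm{Wt}$, if $\Phi_f(X)=[\neg\varphi]\cdot f+[\varphi]\cdot \mathrm{wp}[\![C]\!](X)$ is its wp-characteristic function with respect to $f$, then $$\mathrm{wp}[\![\mathtt{while}(\varphi)\{C\}]\!](f)=\bigsqcup_{i\in\mathbb{N}}\Phi_f^{\,i}(\mathbb{0}),$$ where $\mathbb{0}$ denotes the constant-$\mathbb{0}$ weighting and $\bigsqcup$ is the supremum with respect to the (pointwise) natural order.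
   Context: A (left) module over a monoid $(W,\odot,\mathbb{1})$ is a commutative monoid $(M,+,\mathbb{0})$ with an action $\otimes\colon W\times M\to M$ such that $(v\odot w)\otimes a=v\otimes(w\otimes a)$, $v\otimes(a+b)=(v\otimes a)+(v\otimes b)$, $\mathbb{1}\otimes a=a$ and $v\otimes\mathbb{0}=\mathbb{0}$ for all $v,w\in W$, $a,b\in M$. The natural order on $M$ is $a\preceq b$ iff there is $c\in M$ with $a+c=b$; $M$ is naturally ordered if $\preceq$ is a partial order (then $\mathbb{0}$ is its least element). $M$ is $\omega$-continuous if it is naturally ordered, every increasing $\omega$-chain in $(M,\preceq)$ has a supremum, and addition (in each argument) and, for each fixed $w\in W$, the map $a\mapsto w\otimes a$ preserve suprema of increasing $\omega$-chains. Program states: $\Sigma$ is the set of states (maps from program variables to values); an expression $E$ has a value $E(\sigma)$ in state $\sigma$; guards $\varphi$ are predicates on states; $\sigma[x\mapsto v]$ is $\sigma$ with $x$ updated to $v$. $W$-wgcl programs are generated by $C::= x:=E \mid C;C \mid \mathtt{if}(\varphi)\{C\}\mathtt{else}\{C\} \mid \{C\}\oplus\{C\} \mid \mathtt{weight}\ a \ (a\in W)\mid \mathtt{while}(\varphi)\{C\}$. Weightings: $\mathrm{Wt}=M^{\Sigma}$ (functions $\Sigma\to M$) with pointwise addition, zero, scalar multiplication $(a\otimes f)(\sigma)=a\otimes f(\sigma)$ and pointwise natural order. For a guard $\varphi$, $([\varphi]\cdot f)(\sigma)=f(\sigma)$ if $\sigma\models\varphi$ and $\mathbb{0}$ otherwise.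 $f[x/E](\sigma)=f(\sigma[x\mapsto E(\sigma)])$. The weakest preweighting transformer is defined by induction on programs: $\mathrm{wp}[\![x:=E]\!](f)=f[x/E]$; $\mathrm{wp}[\![C_1;C_2]\!](f)=\mathrm{wp}[\![C_1]\!](\mathrm{wp}[\![C_2]\!](f))$; $\mathrm{wp}[\![\mathtt{if}(\varphi)\{C_1\}\mathtt{else}\{C_2\}]\!](f)=[\varphi]\cdot\mathrm{wp}[\![C_1]\!](f)+[\neg\varphi]\cdot\mathrm{wp}[\![C_2]\!](f)$; $\mathrm{wp}[\![\{C_1\}\oplus\{C_2\}]\!](f)=\mathrm{wp}[\![C_1]\!](f)+\mathrm{wp}[\![C_2]\!](f)$; $\mathrm{wp}[\![\mathtt{weight}\ a]\!](f)=a\otimes f$; $\mathrm{wp}[\![\mathtt{while}(\varphi)\{C'\}]\!](f)$ is the least fixed point (w.r.t. the pointwise natural order) of $X\mapsto[\neg\varphi]\cdot f+[\varphi]\cdot\mathrm{wp}[\![C']\!](X)$. *)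

theory Defs
  imports Main
begin

text \<open>Monoid W: type class monoid_mult (times, 1). Commutative monoid M: class comm_monoid_add.
  The left action is an explicit parameter act :: 'w => 'm => 'm.\<close>

definition nle :: "'m::comm_monoid_add \<Rightarrow> 'm \<Rightarrow> bool" where
  "nle a b \<longleftrightarrow> (\<exists>c. a + c = b)"

definition is_lub :: "('a \<Rightarrow> 'a \<Rightarrow> bool) \<Rightarrow> 'a set \<Rightarrow> 'a \<Rightarrow> bool" where
  "is_lub le S s \<longleftrightarrow> (\<forall>x\<in>S. le x s) \<and> (\<forall>u. (\<forall>x\<in>S. le x u) \<longrightarrow> le s u)"

definition is_omega_chain :: "('a \<Rightarrow> 'a \<Rightarrow> bool) \<Rightarrow> (nat \<Rightarrow> 'a) \<Rightarrow> bool" where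
  "is_omega_chain le X \<longleftrightarrow> (\<forall>i. le (X i) (X (Suc i)))"

definition omega_cont :: "('a \<Rightarrow> 'a \<Rightarrow> bool) \<Rightarrow> ('a \<Rightarrow> 'a) \<Rightarrow> bool" where
  "omega_cont le g \<longleftrightarrow>
     (\<forall>X s. is_omega_chain le X \<and> is_lub le (range X) s \<longrightarrow> is_lub le (range (\<lambda>i. g (X i))) (g s))"

definition left_module :: "('w::monoid_mult \<Rightarrow> 'm::comm_monoid_add \<Rightarrow> 'm) \<Rightarrow> bool" where
  "left_module act \<longleftrightarrow>
     (\<forall>v w a. act (v * w) a = act v (act w a)) \<and>
     (\<forall>v a b. act v (a + b) = act v a + act v b) \<and>
     (\<forall>a. act 1 a = a) \<and>
     (\<forall>v. act v 0 = 0)"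

definition naturally_ordered :: "'m::comm_monoid_add itself \<Rightarrow> bool" where
  "naturally_ordered _ \<longleftrightarrow> (\<forall>a b::'m. nle a b \<and> nle b a \<longrightarrow> a = b)"

definition omega_continuous_module :: "('w::monoid_mult \<Rightarrow> 'm::comm_monoid_add \<Rightarrow> 'm) \<Rightarrow> bool" where
  "omega_continuous_module act \<longleftrightarrow>
     left_module act \<and>
     naturally_ordered TYPE('m) \<and>
     (\<forall>X::nat \<Rightarrow> 'm. is_omega_chain nle X \<longrightarrow> (\<exists>s. is_lub nle (range X) s)) \<and>
     (\<forall>b::'m. omega_cont nle (\<lambda>a. a + b)) \<and>
     (\<forall>b::'m. omega_cont nle (\<lambda>a. b + a)) \<and>
     (\<forall>w. omega_cont nle (act w))"

type_synonym ('x,'v) state = "'x \<Rightarrow> 'v"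

datatype ('x,'v,'w) wgcl =
    Assign 'x "('x,'v) state \<Rightarrow> 'v"
  | Seq "('x,'v,'w) wgcl" "('x,'v,'w) wgcl"
  | Ite "('x,'v) state \<Rightarrow> bool" "('x,'v,'w) wgcl" "('x,'v,'w) wgcl"
  | Choice "('x,'v,'w) wgcl" "('x,'v,'w) wgcl"
  | Weight 'w
  | While "('x,'v) state \<Rightarrow> bool" "('x,'v,'w) wgcl"

definition wle :: "('s \<Rightarrow> 'm::comm_monoid_add) \<Rightarrow> ('s \<Rightarrow> 'm) \<Rightarrow> bool" where
  "wle f g \<longleftrightarrow> (\<forall>\<sigma>. nle (f \<sigma>) (g \<sigma>))"

definition guard :: "('s \<Rightarrow> bool) \<Rightarrow> ('s \<Rightarrow> 'm::comm_monoid_add) \<Rightarrow> 's \<Rightarrow> 'm" where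
  "guard \<phi> f \<sigma> = (if \<phi> \<sigma> then f \<sigma> else 0)"

definition subst :: "(('x,'v) state \<Rightarrow> 'm) \<Rightarrow> 'x \<Rightarrow> (('x,'v) state \<Rightarrow> 'v) \<Rightarrow> ('x,'v) state \<Rightarrow> 'm" where
  "subst f x E \<sigma> = f (\<sigma>(x := E \<sigma>))"

definition is_lfp_wt :: "(('s \<Rightarrow> 'm::comm_monoid_add) \<Rightarrow> ('s \<Rightarrow> 'm)) \<Rightarrow> ('s \<Rightarrow> 'm) \<Rightarrow> bool" where
  "is_lfp_wt F X \<longleftrightarrow> F X = X \<and> (\<forall>Y. F Y = Y \<longrightarrow> wle X Y)"

definition lfp_wt :: "(('s \<Rightarrow> 'm::comm_monoid_add) \<Rightarrow> ('s \<Rightarrow> 'm)) \<Rightarrow> ('s \<Rightarrow> 'm)" where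
  "lfp_wt F = (THE X. is_lfp_wt F X)"

primrec wp :: "('w::monoid_mult \<Rightarrow> 'm::comm_monoid_add \<Rightarrow> 'm) \<Rightarrow> ('x,'v,'w) wgcl
    \<Rightarrow> (('x,'v) state \<Rightarrow> 'm) \<Rightarrow> (('x,'v) state \<Rightarrow> 'm)" where
  "wp act (Assign x E) f = subst f x E"
| "wp act (Seq C1 C2) f = wp act C1 (wp act C2 f)"
| "wp act (Ite \<phi> C1 C2) f = (\<lambda>\<sigma>. guard \<phi> (wp act C1 f) \<sigma> + guard (\<lambda>\<tau>. \<not> \<phi> \<tau>) (wp act C2 f) \<sigma>)"
| "wp act (Choice C1 C2) f = (\<lambda>\<sigma>. wp act C1 f \<sigma> + wp act C2 f \<sigma>)"
| "wp act (Weight a) f = (\<lambda>\<sigma>. act a (f \<sigma>))"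
| "wp act (While \<phi> C) f =
     lfp_wt (\<lambda>X \<sigma>. guard (\<lambda>\<tau>. \<not> \<phi> \<tau>) f \<sigma> + guard \<phi> (wp act C X) \<sigma>)"

definition charfun :: "('w::monoid_mult \<Rightarrow> 'm::comm_monoid_add \<Rightarrow> 'm) \<Rightarrow> (('x,'v) state \<Rightarrow> bool)
    \<Rightarrow> ('x,'v,'w) wgcl \<Rightarrow> (('x,'v) state \<Rightarrow> 'm) \<Rightarrow> (('x,'v) state \<Rightarrow> 'm) \<Rightarrow> (('x,'v) state \<Rightarrow> 'm)" where
  "charfun act \<phi> C f X = (\<lambda>\<sigma>. guard (\<lambda>\<tau>. \<not> \<phi> \<tau>) f \<sigma> + guard \<phi> (wp act C X) \<sigma>)"

end

theory Submission
  imports Defs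
begin

definition po :: "('a \<Rightarrow> 'a \<Rightarrow> bool) \<Rightarrow> bool" where
  "po le \<longleftrightarrow> (\<forall>x. le x x) \<and> (\<forall>x y z. le x y \<longrightarrow> le y z \<longrightarrow> le x z) \<and> (\<forall>x y. le x y \<longrightarrow> le y x \<longrightarrow> x = y)"

lemma po_refl: "po le \<Longrightarrow> le x x" by (simp add: po_def)
lemma po_trans: "po le \<Longrightarrow> le x y \<Longrightarrow> le y z \<Longrightarrow> le x z" unfolding po_def by blast
lemma po_antisym: "po le \<Longrightarrow> le x y \<Longrightarrow> le y x \<Longrightarrow> x = y" unfolding po_def by blast

lemma lub_unique: "po le \<Longrightarrow> is_lub le S a \<Longrightarrow> is_lub le S b \<Longrightarrow> a = b"
  unfolding is_lub_def by (meson po_antisym)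

lemma lub_ub: "is_lub le S a \<Longrightarrow> x \<in> S \<Longrightarrow> le x a"
  unfolding is_lub_def by blast

lemma lub_least: "is_lub le S a \<Longrightarrow> (\<And>x. x \<in> S \<Longrightarrow> le x u) \<Longrightarrow> le a u"
  unfolding is_lub_def by blast

lemma oc_mono:
  assumes p: "po le" and g: "omega_cont le g" and ab: "le a b"
  shows "le (g a) (g b)"
proof -
  define X where "X = (\<lambda>i::nat. if i = 0 then a else b)"
  have ch: "is_omega_chain le X" unfolding is_omega_chain_def X_def
    using ab po_refl[OF p] by auto
  have "is_lub le (range X) b" unfolding is_lub_def
  proof (intro conjI allI impI ballI)
    fix x assume "x \<in> range X" then show "le x b" using ab po_refl[OF p] by (auto simp: X_def)
  next
    fix u assume "\<forall>x\<in>range X. le x u"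
    then have "le (X 1) u" by blast
    then show "le b u" by (simp add: X_def)
  qed
  with ch g have "is_lub le (range (\<lambda>i. g (X i))) (g b)" unfolding omega_cont_def by blast
  moreover have "g a \<in> range (\<lambda>i. g (X i))" unfolding X_def by (auto intro: range_eqI[of _ _ 0])
  ultimately show ?thesis by (rule lub_ub)
qed

lemma chain_mono:
  assumes p: "po le" and c: "is_omega_chain le X" and ij: "i \<le> j"
  shows "le (X i) (X j)"
  using ij
proof (induction j rule: dec_induct)
  case base then show ?case by (rule po_refl[OF p])
next
  case (step n)
  have "le (X n) (X (Suc n))" using c unfolding is_omega_chain_def by blast
  then show ?case using po_trans[OF p step.IH] by blast
qed

lemma oc_chain: "po le \<Longrightarrow> omega_cont le g \<Longrightarrow> is_omega_chain le X \<Longrightarrow> is_omega_chain le (\<lambda>i. g (X i))"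
  unfolding is_omega_chain_def by (metis oc_mono)

lemma oc_comp:
  assumes p: "po le" and g: "omega_cont le g" and h: "omega_cont le h"
  shows "omega_cont le (\<lambda>x. g (h x))"
  unfolding omega_cont_def
proof (intro allI impI, elim conjE)
  fix X s assume c: "is_omega_chain le X" and l: "is_lub le (range X) s"
  have "is_lub le (range (\<lambda>i. h (X i))) (h s)" using h c l unfolding omega_cont_def by blast
  moreover have "is_omega_chain le (\<lambda>i. h (X i))" using oc_chain[OF p h c] .
  ultimately show "is_lub le (range (\<lambda>i. g (h (X i)))) (g (h s))"
    using g unfolding omega_cont_def by blast
qed

lemma oc_const: assumes p: "po le" shows "omega_cont le (\<lambda>x. c)"
  unfolding omega_cont_def is_lub_def
proof (intro allI impI conjI ballI)
  fix X :: "nat \<Rightarrow> 'a" and x assume "x \<in> range (\<lambda>i. c)" then show "le x c" using po_refl[OF p] by auto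
next
  fix X :: "nat \<Rightarrow> 'a" and u assume "\<forall>x\<in>range (\<lambda>i. c). le x u" then show "le c u" by auto
qed

lemma oc_id: "omega_cont le (\<lambda>x. x)"
  unfolding omega_cont_def by simp

lemma kleene:
  assumes p: "po le" and b0: "\<And>x. le b0 x"
    and cpl: "\<And>X. is_omega_chain le X \<Longrightarrow> \<exists>s. is_lub le (range X) s"
    and F: "omega_cont le F"
  shows "\<exists>s. is_lub le (range (\<lambda>i. (F ^^ i) b0)) s \<and> F s = s \<and> (\<forall>Y. F Y = Y \<longrightarrow> le s Y)"
proof -
  let ?K = "\<lambda>i. (F ^^ i) b0"
  have ch: "is_omega_chain le ?K" unfolding is_omega_chain_def
  proof
    fix i show "le (?K i) (?K (Suc i))"
    proof (induction i)
      case 0 show ?case using b0 by simp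
    next
      case (Suc i) then show ?case using oc_mono[OF p F Suc.IH] by simp
    qed
  qed
  obtain s where s: "is_lub le (range ?K) s" using cpl[OF ch] by blast
  have Fs: "is_lub le (range (\<lambda>i. F (?K i))) (F s)" using F ch s unfolding omega_cont_def by blast
  have "is_lub le (range ?K) (F s)"
    unfolding is_lub_def
  proof (intro conjI allI impI ballI)
    fix x assume "x \<in> range ?K"
    then obtain i where x: "x = ?K i" by blast
    show "le x (F s)"
    proof (cases i)
      case 0 then show ?thesis using x b0 by simp
    next
      case (Suc j) then show ?thesis using x lub_ub[OF Fs, of "F (?K j)"] by auto
    qed
  next
    fix u assume u: "\<forall>x\<in>range ?K. le x u"
    show "le (F s) u"
    proof (rule lub_least[OF Fs])
      fix x assume "x \<in> range (\<lambda>i. F (?K i))"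
      then obtain i where "x = ?K (Suc i)" by auto
      then show "le x u" using u by blast
    qed
  qed
  then have fxp: "F s = s" using lub_unique[OF p] s by blast
  have "\<forall>Y. F Y = Y \<longrightarrow> le s Y"
  proof (intro allI impI)
    fix Y assume Y: "F Y = Y"
    have "le (?K i) Y" for i
    proof (induction i)
      case 0 show ?case using b0 by simp
    next
      case (Suc i) then show ?case using oc_mono[OF p F Suc.IH] Y by simp
    qed
    then show "le s Y" using lub_least[OF s] by blast
  qed
  then show ?thesis using s fxp by blast
qed

lemma interchange:
  assumes p: "po le" and G: "\<And>i. omega_cont le (G i)"
    and H: "\<And>f. is_lub le (range (\<lambda>i. G i f)) (H f)"
  shows "omega_cont le H"
  unfolding omega_cont_def
proof (intro allI impI, elim conjE)
  fix X s assume c: "is_omega_chain le X" and l: "is_lub le (range X) s"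
  have Gs: "is_lub le (range (\<lambda>j. G i (X j))) (G i s)" for i
    using G c l unfolding omega_cont_def by blast
  show "is_lub le (range (\<lambda>j. H (X j))) (H s)"
    unfolding is_lub_def
  proof (intro conjI allI impI ballI)
    fix x assume "x \<in> range (\<lambda>j. H (X j))"
    then obtain j where x: "x = H (X j)" by blast
    have "le (G i (X j)) (H s)" for i
    proof -
      have "le (G i (X j)) (G i s)" using lub_ub[OF Gs] by blast
      moreover have "le (G i s) (H s)" using lub_ub[OF H] by blast
      ultimately show ?thesis using po_trans[OF p] by blast
    qed
    then show "le x (H s)" unfolding x using lub_least[OF H] by blast
  next
    fix u assume u: "\<forall>x\<in>range (\<lambda>j. H (X j)). le x u"
    have "le (G i s) u" for i
    proof (rule lub_least[OF Gs])
      fix x assume "x \<in> range (\<lambda>j. G i (X j))"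
      then obtain j where x: "x = G i (X j)" by blast
      have "le (G i (X j)) (H (X j))" using lub_ub[OF H] by blast
      then show "le x u" using u x po_trans[OF p] by blast
    qed
    then show "le (H s) u" using lub_least[OF H] by blast
  qed
qed


lemma nle_po: "po (nle :: 'm::comm_monoid_add \<Rightarrow> 'm \<Rightarrow> bool)" if "naturally_ordered TYPE('m)"
  unfolding po_def
proof (intro conjI allI impI)
  fix x :: 'm show "nle x x" unfolding nle_def by (rule exI[of _ 0]) simp
next
  fix x y z :: 'm assume "nle x y" "nle y z"
  then obtain c d where "x + c = y" "y + d = z" unfolding nle_def by blast
  then have "x + (c + d) = z" by (simp add: add.assoc[symmetric])
  then show "nle x z" unfolding nle_def by blast
next
  fix x y :: 'm assume "nle x y" "nle y x" then show "x = y"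
    using that unfolding naturally_ordered_def by blast
qed

lemma nle_add_mono: "nle a b \<Longrightarrow> nle c d \<Longrightarrow> nle (a + c) (b + (d::'m::comm_monoid_add))"
proof -
  assume "nle a b" "nle c d"
  then obtain x y where "a + x = b" "c + y = d" unfolding nle_def by blast
  moreover have "(a + c) + (x + y) = (a + x) + (c + y)" by (simp add: ac_simps)
  ultimately have "(a + c) + (x + y) = b + d" by simp
  then show ?thesis unfolding nle_def by blast
qed

lemma nle_zero: "nle 0 (a::'m::comm_monoid_add)"
  unfolding nle_def by simp

lemma wle_po: "po (wle :: ('s \<Rightarrow> 'm::comm_monoid_add) \<Rightarrow> _)" if "naturally_ordered TYPE('m)"
proof -
  have p: "po (nle :: 'm \<Rightarrow> 'm \<Rightarrow> bool)" using nle_po that by blast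
  show ?thesis unfolding po_def wle_def
    using po_refl[OF p] po_trans[OF p] po_antisym[OF p] by (blast intro: ext)
qed

lemma wle_zero: "wle (\<lambda>_. 0) f"
  unfolding wle_def by (simp add: nle_zero)

lemma wle_chain_pw: "is_omega_chain wle X \<Longrightarrow> is_omega_chain nle (\<lambda>i. X i \<sigma>)"
  unfolding is_omega_chain_def wle_def by blast

lemma pw_lub_wle:
  assumes "\<And>\<sigma>. is_lub nle (range (\<lambda>i. X i \<sigma>)) (s \<sigma>)"
  shows "is_lub wle (range X) s"
  unfolding is_lub_def wle_def
proof (intro conjI allI impI ballI)
  fix x \<sigma> assume "x \<in> range X"
  then obtain i where "x = X i" by blast
  then show "nle (x \<sigma>) (s \<sigma>)" using lub_ub[OF assms[of \<sigma>]] by blast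
next
  fix u \<sigma> assume u: "\<forall>x\<in>range X. \<forall>\<sigma>. nle (x \<sigma>) (u \<sigma>)"
  show "nle (s \<sigma>) (u \<sigma>)"
  proof (rule lub_least[OF assms[of \<sigma>]])
    fix y assume "y \<in> range (\<lambda>i. X i \<sigma>)"
    then show "nle y (u \<sigma>)" using u by blast
  qed
qed

context
  fixes act :: "'w::monoid_mult \<Rightarrow> 'm::comm_monoid_add \<Rightarrow> 'm"
  assumes A: "omega_continuous_module act"
begin

lemma natord: "naturally_ordered TYPE('m)"
  using A unfolding omega_continuous_module_def by blast

lemma np: "po (nle :: 'm \<Rightarrow> 'm \<Rightarrow> bool)"
  using nle_po natord by blast

lemma wp0: "po (wle :: ('s \<Rightarrow> 'm) \<Rightarrow> _)"
  using wle_po natord by blast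

lemma ncpl: "is_omega_chain nle (X :: nat \<Rightarrow> 'm) \<Longrightarrow> \<exists>s. is_lub nle (range X) s"
  using A unfolding omega_continuous_module_def by blast

lemma wle_lub_pw:
  fixes X :: "nat \<Rightarrow> 's \<Rightarrow> 'm"
  assumes c: "is_omega_chain wle X" and l: "is_lub wle (range X) s"
  shows "is_lub nle (range (\<lambda>i. X i \<sigma>)) (s \<sigma>)"
proof -
  define t where "t \<tau> = (SOME l. is_lub nle (range (\<lambda>i. X i \<tau>)) l)" for \<tau>
  have t: "is_lub nle (range (\<lambda>i. X i \<tau>)) (t \<tau>)" for \<tau>
    unfolding t_def by (rule someI_ex) (rule ncpl[OF wle_chain_pw[OF c]])
  have "is_lub wle (range X) t" by (rule pw_lub_wle[OF t])
  then have "s = t" using lub_unique[OF wp0 l] by blast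
  then show ?thesis using t by simp
qed

lemma wcpl: "is_omega_chain wle (X :: nat \<Rightarrow> 's \<Rightarrow> 'm) \<Longrightarrow> \<exists>s. is_lub wle (range X) s"
proof -
  assume c: "is_omega_chain wle X"
  define t where "t \<tau> = (SOME l. is_lub nle (range (\<lambda>i. X i \<tau>)) l)" for \<tau>
  have t: "is_lub nle (range (\<lambda>i. X i \<tau>)) (t \<tau>)" for \<tau>
    unfolding t_def by (rule someI_ex) (rule ncpl[OF wle_chain_pw[OF c]])
  have "is_lub wle (range X) t" by (rule pw_lub_wle) (rule t)
  then show ?thesis by blast
qed

lemma add_lub:
  fixes a b :: "nat \<Rightarrow> 'm"
  assumes ca: "is_omega_chain nle a" and cb: "is_omega_chain nle b"
    and la: "is_lub nle (range a) sa" and lb: "is_lub nle (range b) sb"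
  shows "is_lub nle (range (\<lambda>i. a i + b i)) (sa + sb)"
  unfolding is_lub_def
proof (intro conjI allI impI ballI)
  fix x assume "x \<in> range (\<lambda>i. a i + b i)"
  then obtain i where x: "x = a i + b i" by blast
  show "nle x (sa + sb)" unfolding x
    by (rule nle_add_mono) (auto intro: lub_ub[OF la] lub_ub[OF lb])
next
  fix u assume u: "\<forall>x\<in>range (\<lambda>i. a i + b i). nle x u"
  have s1: "nle (sa + b j) u" for j
  proof -
    have ch: "is_omega_chain nle (\<lambda>i. a i + b j)"
      unfolding is_omega_chain_def
      using ca nle_add_mono po_refl[OF np] unfolding is_omega_chain_def by blast
    have oc: "omega_cont nle (\<lambda>x. x + b j)"
      using A unfolding omega_continuous_module_def by blast
    have L: "is_lub nle (range (\<lambda>i. a i + b j)) (sa + b j)"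
      using oc ch ca la unfolding omega_cont_def by blast
    show ?thesis
    proof (rule lub_least[OF L])
      fix y assume "y \<in> range (\<lambda>i. a i + b j)"
      then obtain i where y: "y = a i + b j" by blast
      have "nle (a i + b j) (a (max i j) + b (max i j))"
        by (rule nle_add_mono) (rule chain_mono[OF np], (simp_all add: ca cb))+
      moreover have "nle (a (max i j) + b (max i j)) u" using u by blast
      ultimately show "nle y u" unfolding y by (rule po_trans[OF np])
    qed
  qed
  have oc2: "omega_cont nle (\<lambda>x. sa + x)"
    using A unfolding omega_continuous_module_def by blast
  have L2: "is_lub nle (range (\<lambda>j. sa + b j)) (sa + sb)"
    using oc2 cb lb unfolding omega_cont_def by blast
  show "nle (sa + sb) u"
    by (rule lub_least[OF L2]) (use s1 in blast)
qed

lemma oc_if: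
  fixes Af Bf :: "('s \<Rightarrow> 'm) \<Rightarrow> ('s \<Rightarrow> 'm)"
  assumes hA: "omega_cont wle Af" and hB: "omega_cont wle Bf"
  shows "omega_cont wle (\<lambda>f \<sigma>. if \<phi> \<sigma> then Af f \<sigma> else Bf f \<sigma>)"
  unfolding omega_cont_def
proof (intro allI impI, elim conjE)
  fix X :: "nat \<Rightarrow> 's \<Rightarrow> 'm" and s assume c: "is_omega_chain wle X" and l: "is_lub wle (range X) s"
  have cA: "is_omega_chain wle (\<lambda>i. Af (X i))" by (rule oc_chain[OF wp0 hA c])
  have cB: "is_omega_chain wle (\<lambda>i. Bf (X i))" by (rule oc_chain[OF wp0 hB c])
  have lA: "is_lub wle (range (\<lambda>i. Af (X i))) (Af s)" using hA c l unfolding omega_cont_def by blast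
  have lB: "is_lub wle (range (\<lambda>i. Bf (X i))) (Bf s)" using hB c l unfolding omega_cont_def by blast
  show "is_lub wle (range (\<lambda>i \<sigma>. if \<phi> \<sigma> then Af (X i) \<sigma> else Bf (X i) \<sigma>))
          (\<lambda>\<sigma>. if \<phi> \<sigma> then Af s \<sigma> else Bf s \<sigma>)"
  proof (rule pw_lub_wle)
    fix \<sigma>
    show "is_lub nle (range (\<lambda>i. if \<phi> \<sigma> then Af (X i) \<sigma> else Bf (X i) \<sigma>))
          (if \<phi> \<sigma> then Af s \<sigma> else Bf s \<sigma>)"
      using wle_lub_pw[OF cA lA, of \<sigma>] wle_lub_pw[OF cB lB, of \<sigma>] by simp
  qed
qed

lemma oc_plus:
  fixes Af Bf :: "('s \<Rightarrow> 'm) \<Rightarrow> ('s \<Rightarrow> 'm)"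
  assumes hA: "omega_cont wle Af" and hB: "omega_cont wle Bf"
  shows "omega_cont wle (\<lambda>f \<sigma>. Af f \<sigma> + Bf f \<sigma>)"
  unfolding omega_cont_def
proof (intro allI impI, elim conjE)
  fix X :: "nat \<Rightarrow> 's \<Rightarrow> 'm" and s assume c: "is_omega_chain wle X" and l: "is_lub wle (range X) s"
  have cA: "is_omega_chain wle (\<lambda>i. Af (X i))" by (rule oc_chain[OF wp0 hA c])
  have cB: "is_omega_chain wle (\<lambda>i. Bf (X i))" by (rule oc_chain[OF wp0 hB c])
  have lA: "is_lub wle (range (\<lambda>i. Af (X i))) (Af s)" using hA c l unfolding omega_cont_def by blast
  have lB: "is_lub wle (range (\<lambda>i. Bf (X i))) (Bf s)" using hB c l unfolding omega_cont_def by blast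
  show "is_lub wle (range (\<lambda>i \<sigma>. Af (X i) \<sigma> + Bf (X i) \<sigma>)) (\<lambda>\<sigma>. Af s \<sigma> + Bf s \<sigma>)"
  proof (rule pw_lub_wle)
    fix \<sigma>
    show "is_lub nle (range (\<lambda>i. Af (X i) \<sigma> + Bf (X i) \<sigma>)) (Af s \<sigma> + Bf s \<sigma>)"
      by (rule add_lub[OF wle_chain_pw[OF cA] wle_chain_pw[OF cB] wle_lub_pw[OF cA lA] wle_lub_pw[OF cB lB]])
  qed
qed

lemma oc_subst: "omega_cont wle (\<lambda>f :: ('x,'v) state \<Rightarrow> 'm. subst f x E)"
  unfolding omega_cont_def
proof (intro allI impI, elim conjE)
  fix X :: "nat \<Rightarrow> ('x,'v) state \<Rightarrow> 'm" and s
  assume c: "is_omega_chain wle X" and l: "is_lub wle (range X) s"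
  show "is_lub wle (range (\<lambda>i. subst (X i) x E)) (subst s x E)"
    unfolding subst_def
    by (rule pw_lub_wle) (rule wle_lub_pw[OF c l])
qed

lemma oc_weight: "omega_cont wle (\<lambda>(f :: 's \<Rightarrow> 'm) \<sigma>. act a (f \<sigma>))"
  unfolding omega_cont_def
proof (intro allI impI, elim conjE)
  fix X :: "nat \<Rightarrow> 's \<Rightarrow> 'm" and s
  assume c: "is_omega_chain wle X" and l: "is_lub wle (range X) s"
  have oc: "omega_cont nle (act a)" using A unfolding omega_continuous_module_def by blast
  show "is_lub wle (range (\<lambda>i \<sigma>. act a (X i \<sigma>))) (\<lambda>\<sigma>. act a (s \<sigma>))"
  proof (rule pw_lub_wle)
    fix \<sigma>
    show "is_lub nle (range (\<lambda>i. act a (X i \<sigma>))) (act a (s \<sigma>))"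
      using oc wle_chain_pw[OF c] wle_lub_pw[OF c l] unfolding omega_cont_def by blast
  qed
qed

lemma charfun_eq: "charfun act \<phi> C f X = (\<lambda>\<sigma>. if \<phi> \<sigma> then wp act C X \<sigma> else f \<sigma>)"
  by (simp add: charfun_def guard_def fun_eq_iff)

lemma wp_while_eq: "wp act (While \<phi> C) f = lfp_wt (charfun act \<phi> C f)"
proof -
  have "charfun act \<phi> C f = (\<lambda>X \<sigma>. guard (\<lambda>\<tau>. \<not> \<phi> \<tau>) f \<sigma> + guard \<phi> (wp act C X) \<sigma>)"
    by (simp add: charfun_def fun_eq_iff)
  then show ?thesis by simp
qed

lemma while_facts:
  assumes hC: "omega_cont wle (wp act C)"
  shows "(\<exists>!X. is_lfp_wt (charfun act \<phi> C f) X)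
    \<and> is_lub wle (range (\<lambda>i. (charfun act \<phi> C f ^^ i) (\<lambda>_. 0))) (wp act (While \<phi> C) f)"
proof -
  let ?F = "charfun act \<phi> C f"
  have eqF: "?F = (\<lambda>X \<sigma>. if \<phi> \<sigma> then wp act C X \<sigma> else (\<lambda>_. f) X \<sigma>)"
    by (simp add: charfun_eq fun_eq_iff)
  have ocF: "omega_cont wle ?F"
    unfolding eqF by (rule oc_if[OF hC oc_const[OF wp0]])
  obtain s where s: "is_lub wle (range (\<lambda>i. (?F ^^ i) (\<lambda>_. 0))) s" and fx: "?F s = s"
    and least: "\<forall>Y. ?F Y = Y \<longrightarrow> wle s Y"
    using kleene[OF wp0 wle_zero wcpl ocF] by blast
  have lf: "is_lfp_wt ?F s" unfolding is_lfp_wt_def using fx least by blast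
  have uq: "X = s" if "is_lfp_wt ?F X" for X
    using that lf po_antisym[OF wp0] unfolding is_lfp_wt_def by blast
  have ex1: "\<exists>!X. is_lfp_wt ?F X" using lf uq by blast
  have "lfp_wt ?F = s" unfolding lfp_wt_def using lf uq by (rule the_equality)
  then have "wp act (While \<phi> C) f = s" by (simp only: wp_while_eq)
  then show ?thesis using ex1 s by simp
qed

lemma while_oc:
  assumes hC: "omega_cont wle (wp act C)"
  shows "omega_cont wle (wp act (While \<phi> C))"
proof (rule interchange[OF wp0])
  let ?G = "\<lambda>i f. (charfun act \<phi> C f ^^ i) (\<lambda>_. 0)"
  show "is_lub wle (range (\<lambda>i. ?G i f)) (wp act (While \<phi> C) f)" for f
    using while_facts[OF hC] by blast
  show "omega_cont wle (?G i)" for i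
  proof (induction i)
    case 0 show ?case by (simp add: oc_const[OF wp0])
  next
    case (Suc i)
    have eq: "?G (Suc i) = (\<lambda>f \<sigma>. if \<phi> \<sigma> then (\<lambda>f. wp act C (?G i f)) f \<sigma> else (\<lambda>f. f) f \<sigma>)"
      by (simp add: charfun_eq fun_eq_iff)
    show ?case unfolding eq
      by (rule oc_if[OF oc_comp[OF wp0 hC Suc.IH] oc_id])
  qed
qed

lemma wp_oc: "omega_cont wle (wp act C)"
proof (induction C)
  case (Assign x E) then show ?case using oc_subst by simp
next
  case (Seq C1 C2)
  have "wp act (Seq C1 C2) = (\<lambda>f. wp act C1 (wp act C2 f))" by (simp add: fun_eq_iff)
  then show ?case using oc_comp[OF wp0 Seq.IH] by simp
next
  case (Ite \<phi> C1 C2)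
  have "wp act (Ite \<phi> C1 C2) = (\<lambda>f \<sigma>. if \<phi> \<sigma> then wp act C1 f \<sigma> else wp act C2 f \<sigma>)"
    by (simp add: fun_eq_iff guard_def)
  then show ?case using oc_if[OF Ite.IH] by simp
next
  case (Choice C1 C2)
  have "wp act (Choice C1 C2) = (\<lambda>f \<sigma>. wp act C1 f \<sigma> + wp act C2 f \<sigma>)"
    by (simp add: fun_eq_iff)
  then show ?case using oc_plus[OF Choice.IH] by simp
next
  case (Weight a)
  have "wp act (Weight a) = (\<lambda>f \<sigma>. act a (f \<sigma>))" by (simp add: fun_eq_iff)
  then show ?case using oc_weight by simp
next
  case (While \<phi> C)
  then show ?case by (rule while_oc)
qed

end

theorem mainTheorem1:
  fixes act :: "'w::monoid_mult \<Rightarrow> 'm::comm_monoid_add \<Rightarrow> 'm"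
  assumes "omega_continuous_module act"
  shows "(\<forall>C :: ('x,'v,'w) wgcl. omega_cont wle (wp act C))
       \<and> (\<forall>(\<phi> :: ('x,'v) state \<Rightarrow> bool) (C :: ('x,'v,'w) wgcl) (f :: ('x,'v) state \<Rightarrow> 'm).
            (\<exists>!X. is_lfp_wt (charfun act \<phi> C f) X)
          \<and> is_lub wle (range (\<lambda>i. (charfun act \<phi> C f ^^ i) (\<lambda>_. 0)))
                       (wp act (While \<phi> C) f))"
  using wp_oc[OF assms] while_facts[OF assms wp_oc[OF assms]] by blast

end
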